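(* Let $n\le -1$ be an odd integer. In $\mathbb{F}_3[v]$, the irreducible polynomial $a=v^2+v-1$ divides the reduction of $g_n$ if and only if $n\equiv 1\pmod 4$; moreover $a^2$ never divides the reduction of $g_n$.
   Context: Let $a=v^2+v-1$ and $B=(v^2-1)(v^2-v-1)$. For odd $n\le -1$ with $k=(1-n)/2$, define $g_n$ by $g_n=\big[(a+b)^k-(a-b)^k-(a+b)^{k+2}+(a-b)^{k+2}\big]/b$, where $b$ is a formal square root of $B$; the expression is a polynomial in $a$ and $b^2=B$, hence $g_n\in\mathbb{Z}[v]$. *)

theory Defs
  imports "HOL-Computational_Algebra.Polynomial" "Berlekamp_Zassenhaus.Finite_Field"
begin

definition aP :: "int poly" where "aP = [:-1, 1, 1:]"
definition BP :: "int poly" where "BP = [:-1, 0, 1:] * [:-1, -1, 1:]"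

text \<open>D k = ((a+b)^k - (a-b)^k)/b with b^2 = B, written out via the binomial theorem:
  (a+b)^k - (a-b)^k = sum_j C(k,j) a^(k-j) b^j (1 - (-1)^j), so dividing by b gives
  sum over odd j of 2 C(k,j) a^(k-j) B^((j-1)/2).\<close>
definition Dpart :: "nat \<Rightarrow> int poly" where
  "Dpart k = (\<Sum>j\<in>{..k}. if odd j then smult (2 * int (k choose j)) (aP ^ (k - j) * BP ^ ((j - 1) div 2)) else 0)"

definition gpoly :: "int \<Rightarrow> int poly" where
  "gpoly n = (let k = nat ((1 - n) div 2) in Dpart k - Dpart (k + 2))"

text \<open>A three-element index type; three mod_ring is the prime field F_3.\<close>
typedef three = "{0::nat, 1, 2}" by auto

lemma card_three: "CARD(three) = 3"
  using type_definition.card[OF type_definition_three] by simp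

instance three :: finite
  by intro_classes (metis card_three card.infinite zero_neq_numeral)

instance three :: prime_card
  by intro_classes (simp add: card_three)

definition red3 :: "int poly \<Rightarrow> three mod_ring poly" where
  "red3 p = map_poly of_int p"

end

theory Submission
  imports Defs
begin

definition Dg :: "'a::comm_ring_1 poly \<Rightarrow> 'a poly \<Rightarrow> nat \<Rightarrow> 'a poly" where
"Dg x y k = (\<Sum>j\<in>{..k}. if odd j then smult (of_nat (2 * (k choose j))) (x^(k-j) * y^((j-1) div 2)) else 0)"

definition c0 :: "'a::comm_ring_1 poly \<Rightarrow> nat \<Rightarrow> 'a poly" where
 "c0 y k = (if odd k then smult 2 (y^((k-1) div 2)) else 0)"
definition c1 :: "'a::comm_ring_1 poly \<Rightarrow> nat \<Rightarrow> 'a poly" where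
 "c1 y k = (if even k \<and> k>0 then smult (of_nat (2*k)) (y^((k-2) div 2)) else 0)"

lemma Dg_split: "x^2 dvd (Dg x y k - c0 y k - x * c1 y k)"
proof (cases "k \<ge> 2")
  case False then have "k = 0 \<or> k = 1" by auto
  then show ?thesis by (auto simp: Dg_def c0_def c1_def)
next
  case True
  have set: "{..k} = insert k (insert (k-1) {..k-2})" using True by auto
  define t where "t = (\<lambda>j. if odd j then smult (of_nat (2 * (k choose j))) (x^(k-j) * y^((j-1) div 2)) else 0)"
  have D: "Dg x y k = t k + t (k-1) + (\<Sum>j\<in>{..k-2}. t j)" unfolding Dg_def set t_def[symmetric]
  proof -
    have a: "k \<notin> insert (k-1) {..k-2}" "k-1 \<notin> {..k-2}" using True by auto
    show "sum t (insert k (insert (k - 1) {..k - 2})) = t k + t (k - 1) + sum t {..k - 2}"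
      using sum.insert[OF _ a(1), of t] sum.insert[OF _ a(2), of t] by (simp add: add.assoc)
  qed
  have 1: "t k = c0 y k" by (simp add: c0_def t_def)
  have ch: "k choose (k-1) = k" proof -
    have "k choose (k-1) = k choose (k - (k-1))" using True by (intro binomial_symmetric) simp
    also have "k - (k-1) = 1" using True by simp
    finally show ?thesis by simp
  qed
  have 2: "t (k-1) = x * c1 y k"
  proof -
    obtain k' where k': "k = Suc (Suc k')" using True by (metis add_2_eq_Suc le_Suc_ex)
    have "k choose Suc k' = k" using ch k' by simp
    then show ?thesis using k' by (auto simp: c1_def t_def mult_smult_right)
  qed
  have 3: "x^2 dvd (\<Sum>j\<in>{..k-2}. t j)"
  proof (rule dvd_sum)
    fix j assume "j \<in> {..k-2}"
    then have "k - j = 2 + (k-j-2)" using True by auto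
    then have "x^(k-j) = x^2 * x^(k-j-2)" by (metis power_add)
    then show "x^2 dvd t j" by (simp add: t_def dvd_smult)
  qed
  show ?thesis using D 1 2 3 by simp
qed

lemma red3_Dpart: "red3 (Dpart k) = Dg (red3 aP) (red3 BP) k"
  unfolding red3_def Dpart_def Dg_def
  apply (subst of_int_poly_hom.hom_sum)
  apply (rule sum.cong)
  by (auto simp: hom_distribs)

lemma three0: "(of_nat m :: three mod_ring) = 0 \<longleftrightarrow> 3 dvd m"
proof
  assume "of_nat m = (0::three mod_ring)" then show "3 dvd m"
    using of_nat_0_mod_ring_dvd card_three by metis
next
  assume "3 dvd m" then obtain j where "m = 3*j" by auto
  have "(of_nat 3 :: three mod_ring) = 0" using of_nat_card_eq_0[where 'a=three] card_three by simp
  then show "(of_nat m :: three mod_ring) = 0" using \<open>m = 3*j\<close> by simp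
qed

lemma three_int0: "(of_int 3 :: three mod_ring) = 0"
  using three0[of 3] by (metis of_int_of_nat_eq of_nat_numeral dvd_refl)

lemma idB: "BP = aP * (aP + [:2,-3:]) + [:2,-2:]"
  by (simp add: aP_def BP_def)
lemma idC: "aP + [:2,-2:] * [:-2,-1:] = 1 + smult 3 [:-2,1,1:]"
  by (simp add: aP_def one_pCons)

lemma three3: "(3::three mod_ring) = 0"
  using three_int0 by simp

lemma red3_smult3: "red3 (smult 3 p) = 0"
  by (rule poly_eqI) (simp only: red3_def coeff_map_poly of_int_0 coeff_smult of_int_mult three_int0 mult_zero_left coeff_0)

lemma FB: "red3 BP = red3 aP * red3 (aP + [:2,-3:]) + red3 [:2,-2:]"
  unfolding idB red3_def of_int_poly_hom.hom_add of_int_poly_hom.hom_mult by (rule refl)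
lemma FC: "red3 aP + red3 [:2,-2:] * red3 [:-2,-1:] = 1"
proof -
  have "red3 aP + red3 [:2,-2:] * red3 [:-2,-1:] = red3 (aP + [:2,-2:] * [:-2,-1:])"
    by (simp only: red3_def of_int_poly_hom.hom_add of_int_poly_hom.hom_mult)
  also have "\<dots> = red3 (1 + smult 3 [:-2,1,1:])" by (simp only: idC)
  also have "\<dots> = red3 1 + red3 (smult 3 [:-2,1,1:])"
    by (simp only: red3_def of_int_poly_hom.hom_add)
  also have "\<dots> = 1" by (simp only: red3_smult3) (simp add: red3_def)
  finally show ?thesis .
qed

lemma degA: "degree (red3 aP) = 2"
  by (simp add: red3_def aP_def)
lemma redR: "red3 [:2,-2:] = [:2,-2:]"
  by (simp add: red3_def)
lemma ndvd_lin:
  assumes "p \<noteq> 0" "degree p \<le> 1"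
  shows "\<not> red3 aP dvd p"
proof
  assume "red3 aP dvd p"
  then have "degree (red3 aP) \<le> degree p" using dvd_imp_degree_le assms(1) by blast
  then show False using degA assms(2) by linarith
qed

lemma copAB: "coprime (red3 aP) (red3 BP)"
proof (rule coprimeI)
  fix d assume d1: "d dvd red3 aP" and d2: "d dvd red3 BP"
  have "d dvd red3 aP * red3 (aP + [:2,-3:]) + red3 [:2,-2:]" using d2 unfolding FB .
  then have dR: "d dvd red3 [:2,-2:]" using dvd_add_right_iff[OF dvd_mult2[OF d1]] by blast
  have "d dvd red3 aP + red3 [:2,-2:] * red3 [:-2,-1:]" by (rule dvd_add[OF d1 dvd_mult2[OF dR]])
  then show "d dvd 1" unfolding FC .
qed

theorem lemma5p6:
  fixes n :: int
  assumes "odd n" and "n \<le> -1"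
  shows "(red3 aP dvd red3 (gpoly n) \<longleftrightarrow> n mod 4 = 1) \<and> \<not> (red3 aP ^ 2 dvd red3 (gpoly n))"
proof -
  define k where "k = nat ((1 - n) div 2)"
  obtain j where nj: "n = 2*j+1" using assms(1) by (auto elim: oddE)
  have "(1 - n) div 2 = - j" unfolding nj by simp
  then have kj: "int k = - j" using assms(2) nj unfolding k_def by simp
  have k1: "k \<ge> 1" using kj assms(2) nj by linarith
  have nk: "n = 1 - 2 * int k" using kj nj by simp
  have mod4: "n mod 4 = 1 \<longleftrightarrow> even k" using nk by presburger
  define A where "A = red3 aP"
  define B where "B = red3 BP"
  define Q where "Q = red3 (aP + [:2,-3:])"
  define R where "R = red3 [:2,-2:]"
  have BQR: "B = A * Q + R" unfolding A_def B_def Q_def R_def using FB .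
  have Rv: "R = [:2,-2:]" unfolding R_def using redR .
  have cop: "coprime A B" unfolding A_def B_def using copAB .
  have A0: "A \<noteq> 0" using degA unfolding A_def by auto
  have nd: "\<And>p. p \<noteq> 0 \<Longrightarrow> degree p \<le> 1 \<Longrightarrow> \<not> A dvd p" unfolding A_def using ndvd_lin by blast
  have g: "red3 (gpoly n) = Dg A B k - Dg A B (k+2)"
  proof -
    have "red3 (gpoly n) = red3 (Dpart k) - red3 (Dpart (k+2))"
      unfolding gpoly_def Let_def k_def[symmetric] red3_def by (rule of_int_poly_hom.hom_minus)
    then show ?thesis unfolding red3_Dpart A_def B_def .
  qed
  obtain E1 where E1: "Dg A B k - c0 B k - A * c1 B k = A^2 * E1" using Dg_split unfolding dvd_def by (metis mult.commute)
  obtain E2 where E2: "Dg A B (k+2) - c0 B (k+2) - A * c1 B (k+2) = A^2 * E2" using Dg_split unfolding dvd_def by (metis mult.commute)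
  have G: "red3 (gpoly n) = (c0 B k - c0 B (k+2)) + A * (c1 B k - c1 B (k+2)) + A^2 * (E1 - E2)"
  proof -
    have D1: "Dg A B k = A^2 * E1 + A * c1 B k + c0 B k" using E1 by (simp only: diff_eq_eq)
    have D2: "Dg A B (k+2) = A^2 * E2 + A * c1 B (k+2) + c0 B (k+2)" using E2 by (simp only: diff_eq_eq)
    show ?thesis unfolding g D1 D2 by (simp add: algebra_simps)
  qed
  have two: "(2::three mod_ring) \<noteq> 0" using three0[of 2] by simp
  show ?thesis
  proof (cases "even k")
    case False
    define m where "m = (k-1) div 2"
    have km: "k = 2*m+1" using False unfolding m_def by presburger
    have G2: "red3 (gpoly n) = smult 2 (B^m * (1 - B)) + A * 0 + A^2 * (E1 - E2)"
      using G False unfolding km by (simp add: c0_def c1_def algebra_simps smult_diff_right)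
    have nA: "\<not> A dvd red3 (gpoly n)"
    proof
      assume "A dvd red3 (gpoly n)"
      then have "A dvd smult 2 (B^m * (1 - B))" unfolding G2
        by (metis add.right_neutral dvd_add_left_iff dvd_mult2 dvd_triv_left mult_zero_right power2_eq_square)
      then have "A dvd B^m * (1 - B)" using two dvd_smult_cancel by blast
      then have "A dvd 1 - B" using cop by (simp add: coprime_dvd_mult_right_iff)
      then have "A dvd (1 - B) + A * Q" by simp
      then have "A dvd [:-1, 2:]" using BQR Rv by (simp add: one_pCons algebra_simps)
      moreover have "[:-1, 2::three mod_ring:] \<noteq> 0" by simp
      ultimately show False using nd[of "[:-1,2:]"] by simp
    qed
    have "\<not> A^2 dvd red3 (gpoly n)"
      using nA dvd_trans[of A "A^2"] by (auto simp: power2_eq_square)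
    then show ?thesis using nA mod4 False A_def by simp
  next
    case True
    then have k2: "k \<ge> 2" using k1 by presburger
    define m where "m = (k-2) div 2"
    have km: "k = 2*m+2" using True k2 unfolding m_def by presburger
    define c where "c = (of_nat (2*k+4) :: three mod_ring)"
    define Y where "Y = smult (of_nat (2*k)) 1 - smult c B"
    have G2: "red3 (gpoly n) = A * (B^m * Y) + A^2 * (E1 - E2)"
      using G True k2 unfolding Y_def c_def km by (simp add: c0_def c1_def algebra_simps smult_diff_right)
    have yA: "A dvd red3 (gpoly n)" unfolding G2 by (simp add: power2_eq_square)
    have nA2: "\<not> A^2 dvd red3 (gpoly n)"
    proof
      assume "A^2 dvd red3 (gpoly n)"
      then have "A * A dvd A * (B^m * Y)" unfolding G2 power2_eq_square
        by (metis dvd_add_left_iff dvd_triv_left)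
      then have "A dvd B^m * Y" using A0 by simp
      then have "A dvd Y" using cop by (simp add: coprime_dvd_mult_right_iff)
      then have "A dvd Y + smult c (A * Q)" by (simp add: dvd_smult)
      then have "A dvd [:of_nat (2*k) - c * 2, c * 2:]"
        using BQR Rv unfolding Y_def by (simp add: algebra_simps smult_add_right)
      moreover have "[:of_nat (2*k) - c * 2, c * 2:] \<noteq> 0"
      proof
        assume "[:of_nat (2*k) - c * 2, c * 2:] = 0"
        then have a: "c * 2 = 0" and b: "of_nat (2*k) = c * 2" by auto
        have "c * 2 = of_nat ((2*k+4)*2)" unfolding c_def by simp
        with a b have "3 dvd (2*k+4)*2" "3 dvd 2*k" using three0 by metis+
        then show False by presburger
      qed
      ultimately show False using nd by simp
    qed
    then show ?thesis using yA mod4 True A_def by simp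
  qed
qed
end
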